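(* West's bijection from $\mathrm{Av}_n(123)$ to $\mathrm{Av}_n(132)$ maps $\mathrm{Av}_n(123,132^{\star})$ bijectively onto $\mathrm{Av}_n(132,123^{\star})$. In particular $|\mathrm{Av}_n(123,132^{\star})|=|\mathrm{Av}_n(132,123^{\star})|$.
   Context: For $w=w_1\cdots w_{m}\in S_{m}$ and $1\le i\le m+1$, let $w^i$ be obtained by inserting $m+1$ immediately before $w_i$ (at the end if $i=m+1$); site $i$ is active with respect to a pattern $y$ if $w^i$ avoids $y$. For $x\in S_n$, $\mathrm{small}_k(x)$ is the subsequence of entries $1,\dots,k$, and $\mathrm{Act}_j(x;y)$ is the set of active sites of $\mathrm{small}_{n+1-j}(x)$ with respect to $y$. The signature of $x$ with respect to $y$ is the word $\mathfrak{S}(x;y)=|\mathrm{Act}_1(x;y)|\cdots|\mathrm{Act}_{n-1}(x;y)|$. West proved that a permutation in $\mathrm{Av}_n(123)$ (resp. $\mathrm{Av}_n(132)$) is uniquely determined by its signature with respect to $123$ (resp. $132$), and that $\{\mathfrak{S}(x;123):x\in\mathrm{Av}_n(123)\}=\{\mathfrak{S}(x;132):x\in\mathrm{Av}_n(132)\}$; West's bijection sends $x\in\mathrm{Av}_n(123)$ to the unique $x'\in\mathrm{Av}_n(132)$ with $\mathfrak{S}(x';132)=\mathfrak{S}(x;123)$. $\mathrm{Av}_n(\cdot)$ denotes the set of permutations in $S_n$ avoiding the listed patterns. An occurrence of $132^{\star}$ in $x$ is a pair of indices $a<b<n$ with $x_a<x_{b+1}$ and $x_b=x_{b+1}+1$;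 an occurrence of $123^{\star}$ is a pair $a<b<n$ with $x_a<x_b$ and $x_{b+1}=x_b+1$. *)

theory Defs
  imports Main "HOL-Library.Sublist"
begin

text \<open>Permutations are lists of naturals; x \<in> S_n iff x lists 1..n each exactly once.
  Positions in lists are 0-based; the paper's 1-based positions are translated accordingly.\<close>

definition is_perm :: "nat \<Rightarrow> nat list \<Rightarrow> bool" where
  "is_perm n x \<longleftrightarrow> distinct x \<and> set x = {1..n}"

definition order_iso :: "nat list \<Rightarrow> nat list \<Rightarrow> bool" where
  "order_iso a b \<longleftrightarrow> length a = length b \<and>
     (\<forall>i<length a. \<forall>j<length a. a!i < a!j \<longleftrightarrow> b!i < b!j)"

definition contains :: "nat list \<Rightarrow> nat list \<Rightarrow> bool" where
  "contains x y \<longleftrightarrow> (\<exists>s. subseq s x \<and> order_iso s y)"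

definition avoids :: "nat list \<Rightarrow> nat list \<Rightarrow> bool" where
  "avoids x y \<longleftrightarrow> \<not> contains x y"

definition Av :: "nat \<Rightarrow> nat list list \<Rightarrow> nat list set" where
  "Av n ys = {x. is_perm n x \<and> (\<forall>y\<in>set ys. avoids x y)}"

text \<open>w^i: insert m+1 immediately before w_i (1-based i, 1 \<le> i \<le> m+1).\<close>
definition ins_max :: "nat list \<Rightarrow> nat \<Rightarrow> nat list" where
  "ins_max w i = take (i - 1) w @ [length w + 1] @ drop (i - 1) w"

definition active_sites :: "nat list \<Rightarrow> nat list \<Rightarrow> nat set" where
  "active_sites w y = {i \<in> {1..length w + 1}. avoids (ins_max w i) y}"

definition small :: "nat \<Rightarrow> nat list \<Rightarrow> nat list" where
  "small k x = filter (\<lambda>v. v \<le> k) x"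

definition Act :: "nat \<Rightarrow> nat list \<Rightarrow> nat list \<Rightarrow> nat set" where
  "Act j x y = active_sites (small (length x + 1 - j) x) y"

definition signature :: "nat list \<Rightarrow> nat list \<Rightarrow> nat list" where
  "signature x y = map (\<lambda>j. card (Act j x y)) [1..<length x]"

definition west :: "nat list \<Rightarrow> nat list" where
  "west x = (THE x'. x' \<in> Av (length x) [[1,3,2]] \<and>
                     signature x' [1,3,2] = signature x [1,2,3])"

text \<open>Occurrences of 132* and 123* (paper's indices a<b<n, 1-based; here 0-based).\<close>
definition has_132star :: "nat list \<Rightarrow> bool" where
  "has_132star x \<longleftrightarrow> (\<exists>a b. a < b \<and> b + 1 < length x \<and>
       x!a < x!(b+1) \<and> x!b = x!(b+1) + 1)"

definition has_123star :: "nat list \<Rightarrow> bool" where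
  "has_123star x \<longleftrightarrow> (\<exists>a b. a < b \<and> b + 1 < length x \<and>
       x!a < x!b \<and> x!(b+1) = x!b + 1)"

end

theory Submission
  imports Defs
begin
lemma all3: "(\<forall>i<Suc (Suc (Suc 0)). P i) \<longleftrightarrow> P 0 \<and> P (Suc 0) \<and> P (Suc (Suc 0))"
  by (auto simp: less_Suc_eq)

lemma order_iso_123: "order_iso [a,b,c] [1,2,3] \<longleftrightarrow> a<b \<and> b<c"
  unfolding order_iso_def by (simp only: length_Cons list.size all3 nth_Cons_0 nth_Cons_Suc) auto

lemma order_iso_132: "order_iso [a,b,c] [1,3,2] \<longleftrightarrow> a<c \<and> c<b"
  unfolding order_iso_def by (simp only: length_Cons list.size all3 nth_Cons_0 nth_Cons_Suc) auto

lemma subseq_drop_mono: "subseq s (drop j x) \<Longrightarrow> i \<le> j \<Longrightarrow> subseq s (drop i x)"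
proof -
  assume "subseq s (drop j x)" "i \<le> j"
  moreover have "drop i x = take (j-i) (drop i x) @ drop j x"
    using \<open>i \<le> j\<close> by (metis append_take_drop_id drop_drop le_add_diff_inverse2)
  ultimately show ?thesis by (metis subseq_drop_many)
qed

lemma subseq_nth_Cons: "subseq s (drop (Suc i) x) \<Longrightarrow> i < length x \<Longrightarrow> subseq (x!i # s) (drop i x)"
  by (simp add: Cons_nth_drop_Suc[symmetric])

lemma subseq3: "i<j \<Longrightarrow> j<k \<Longrightarrow> k<length x \<Longrightarrow> subseq [x!i,x!j,x!k] x"
proof -
  assume a: "i<j" "j<k" "k<length x"
  have "subseq [x!k] (drop k x)" by (rule subseq_nth_Cons) (use a in auto)
  then have "subseq [x!k] (drop (Suc j) x)" by (rule subseq_drop_mono[of _ k]) (use a in auto)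
  then have "subseq [x!j,x!k] (drop j x)" by (rule subseq_nth_Cons) (use a in auto)
  then have "subseq [x!j,x!k] (drop (Suc i) x)" by (rule subseq_drop_mono[of _ j]) (use a in auto)
  then have "subseq [x!i,x!j,x!k] (drop i x)" by (rule subseq_nth_Cons) (use a in auto)
  then show ?thesis using subseq_drop_mono[of _ i x 0] by simp
qed

lemma subseq3_D: assumes "subseq [a,b,c] x"
  shows "\<exists>i j k. i<j \<and> j<k \<and> k<length x \<and> x!i=a \<and> x!j=b \<and> x!k=c"
proof -
  obtain us1 vs1 where 1: "x = us1 @ a # vs1" "subseq [b,c] vs1" using list_emb_ConsD[OF assms] by auto
  obtain us2 vs2 where 2: "vs1 = us2 @ b # vs2" "subseq [c] vs2" using list_emb_ConsD[OF 1(2)] by auto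
  obtain us3 vs3 where 3: "vs2 = us3 @ c # vs3" using list_emb_ConsD[OF 2(2)] by auto
  let ?i = "length us1" let ?j = "length us1 + 1 + length us2"
  let ?k = "length us1 + 1 + length us2 + 1 + length us3"
  have "?i < ?j \<and> ?j < ?k \<and> ?k < length x \<and> x!?i=a \<and> x!?j=b \<and> x!?k=c"
    using 1 2 3 by (simp add: nth_append)
  then show ?thesis by (intro exI[of _ ?i] exI[of _ ?j] exI[of _ ?k])
qed

definition p123 :: "nat list \<Rightarrow> bool" where
  "p123 x \<longleftrightarrow> (\<exists>i j k. i<j \<and> j<k \<and> k<length x \<and> x!i<x!j \<and> x!j<x!k)"
definition p132 :: "nat list \<Rightarrow> bool" where
  "p132 x \<longleftrightarrow> (\<exists>i j k. i<j \<and> j<k \<and> k<length x \<and> x!i<x!k \<and> x!k<x!j)"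

lemma len3: "length s = 3 \<Longrightarrow> \<exists>a b c. s = [a,b,c]"
  by (auto simp: numeral_3_eq_3 length_Suc_conv)

lemma contains_123: "contains x [1,2,3] \<longleftrightarrow> p123 x"
proof
  assume "contains x [1,2,3]"
  then obtain s where s: "subseq s x" "order_iso s [1,2,3]" unfolding contains_def by auto
  then have "length s = 3" unfolding order_iso_def by simp
  then obtain a b c where abc: "s = [a,b,c]" using len3 by blast
  have o: "a<b \<and> b<c" using s(2) unfolding abc order_iso_123 .
  obtain i j k where "i<j \<and> j<k \<and> k<length x \<and> x!i=a \<and> x!j=b \<and> x!k=c"
    using subseq3_D[of a b c x] s(1) abc by blast
  then show "p123 x" using o unfolding p123_def by blast
next
  assume "p123 x"
  then obtain i j k where "i<j \<and> j<k \<and> k<length x \<and> x!i<x!j \<and> x!j<x!k" unfolding p123_def by blast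
  then have "subseq [x!i,x!j,x!k] x" "order_iso [x!i,x!j,x!k] [1,2,3]"
    using subseq3 by (auto simp only: order_iso_123)
  then show "contains x [1,2,3]" unfolding contains_def by blast
qed

lemma contains_132: "contains x [1,3,2] \<longleftrightarrow> p132 x"
proof
  assume "contains x [1,3,2]"
  then obtain s where s: "subseq s x" "order_iso s [1,3,2]" unfolding contains_def by auto
  then have "length s = 3" unfolding order_iso_def by simp
  then obtain a b c where abc: "s = [a,b,c]" using len3 by blast
  have o: "a<c \<and> c<b" using s(2) unfolding abc order_iso_132 .
  obtain i j k where "i<j \<and> j<k \<and> k<length x \<and> x!i=a \<and> x!j=b \<and> x!k=c"
    using subseq3_D[of a b c x] s(1) abc by blast
  then show "p132 x" using o unfolding p132_def by blast
next
  assume "p132 x"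
  then obtain i j k where "i<j \<and> j<k \<and> k<length x \<and> x!i<x!k \<and> x!k<x!j" unfolding p132_def by blast
  then have "subseq [x!i,x!j,x!k] x" "order_iso [x!i,x!j,x!k] [1,3,2]"
    using subseq3 by (auto simp only: order_iso_132)
  then show "contains x [1,3,2]" unfolding contains_def by blast
qed

lemma perm_len: "is_perm n x \<Longrightarrow> length x = n"
  unfolding is_perm_def by (metis card_atLeastAtMost diff_Suc_1 distinct_card)

lemma perm_nth: "is_perm n x \<Longrightarrow> t < n \<Longrightarrow> 1 \<le> x!t \<and> x!t \<le> n"
  by (metis atLeastAtMost_iff is_perm_def nth_mem perm_len)

lemma perm_nth_inj: "is_perm n x \<Longrightarrow> s < n \<Longrightarrow> t < n \<Longrightarrow> x!s = x!t \<longleftrightarrow> s = t"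
  by (metis is_perm_def nth_eq_iff_index_eq perm_len)

lemma small_perm: "is_perm n x \<Longrightarrow> k \<le> n \<Longrightarrow> is_perm k (small k x)"
  unfolding is_perm_def small_def by auto

lemma small_small: "k \<le> l \<Longrightarrow> small k (small l x) = small k x"
  unfolding small_def by (auto intro: filter_cong)

lemma small_id: "is_perm n x \<Longrightarrow> small n x = x"
  unfolding is_perm_def small_def by (auto simp: filter_id_conv)

lemma len_ins: "length (ins_max w i) = length w + 1"
  unfolding ins_max_def by simp

lemma nth_ins: "1 \<le> i \<Longrightarrow> i \<le> length w + 1 \<Longrightarrow> t \<le> length w \<Longrightarrow>
  ins_max w i ! t = (if t < i-1 then w!t else if t = i-1 then length w + 1 else w!(t-1))"
  unfolding ins_max_def by (auto simp: nth_append min_def)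

lemma ins_perm: "is_perm m w \<Longrightarrow> 1 \<le> i \<Longrightarrow> i \<le> m+1 \<Longrightarrow> is_perm (m+1) (ins_max w i)"
proof -
  assume a: "is_perm m w" "1 \<le> i" "i \<le> m+1"
  have "set (ins_max w i) = insert (m+1) (set w)" unfolding ins_max_def
    using a perm_len[OF a(1)] by (metis Un_insert_right append_Cons append_Nil append_take_drop_id set_append list.set(2))
  moreover have "m+1 \<notin> set w" using a(1) unfolding is_perm_def by auto
  then have "m+1 \<notin> set (take (i-1) w)" "m+1 \<notin> set (drop (i-1) w)"
    by (meson in_set_takeD in_set_dropD)+
  then have "distinct (ins_max w i)" using a perm_len[OF a(1)] unfolding ins_max_def is_perm_def
    by (auto simp: set_take_disj_set_drop_if_distinct)
  ultimately show ?thesis using a(1) unfolding is_perm_def by auto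
qed

lemma small_ins: "is_perm m w \<Longrightarrow> small m (ins_max w i) = w"
proof -
  assume a: "is_perm m w"
  have "small m (ins_max w i) = small m (take (i-1) w) @ small m (drop (i-1) w)"
    using a unfolding ins_max_def small_def by (simp add: perm_len)
  also have "\<dots> = small m w" unfolding small_def by (metis append_take_drop_id filter_append)
  finally show ?thesis using small_id[OF a] by simp
qed

lemma decomp: assumes "is_perm n x" "1 \<le> n"
  shows "\<exists>i. 1 \<le> i \<and> i \<le> n \<and> x = ins_max (small (n-1) x) i"
proof -
  have len: "length x = n" using perm_len assms by blast
  have "n \<in> set x" using assms unfolding is_perm_def by auto
  then obtain q where q: "q < n" "x!q = n" by (metis in_set_conv_nth len)
  have x: "x = take q x @ n # drop (Suc q) x" using q len by (metis id_take_nth_drop)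
  have d: "distinct x" using assms is_perm_def by blast
  have d': "distinct (take q x @ n # drop (Suc q) x)" using d x by metis
  have nt: "n \<notin> set (take q x)" "n \<notin> set (drop (Suc q) x)" using d' by auto
  have le: "\<forall>v\<in>set x. v \<le> n" using assms unfolding is_perm_def by auto
  have s1: "small (n-1) (take q x) = take q x"
    unfolding small_def filter_id_conv
  proof
    fix v assume "v \<in> set (take q x)"
    then have "v \<in> set x" "v \<noteq> n" using nt(1) in_set_takeD by metis+
    then show "v \<le> n-1" using le by fastforce
  qed
  have s2: "small (n-1) (drop (Suc q) x) = drop (Suc q) x"
    unfolding small_def filter_id_conv
  proof
    fix v assume "v \<in> set (drop (Suc q) x)"
    then have "v \<in> set x" "v \<noteq> n" using nt(2) in_set_dropD by metis+
    then show "v \<le> n-1" using le by fastforce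
  qed
  have sm: "small (n-1) x = take q x @ drop (Suc q) x"
  proof -
    have "small (n-1) x = small (n-1) (take q x @ n # drop (Suc q) x)" by (rule arg_cong[OF x])
    also have "\<dots> = small (n-1) (take q x) @ small (n-1) (drop (Suc q) x)"
      using assms(2) unfolding small_def by simp
    finally show ?thesis using s1 s2 by simp
  qed
  have lt: "length (take q x) = q" using q len by simp
  have "ins_max (small (n-1) x) (q+1) = take q x @ [n] @ drop (Suc q) x"
    unfolding ins_max_def sm using lt len q assms(2) by simp
  also have "\<dots> = x" using x[symmetric] by simp
  finally have "ins_max (small (n-1) x) (q+1) = x" .
  then show ?thesis using q by (intro exI[of _ "q+1"]) auto
qed

lemma Av1: "x \<in> Av n [y] \<longleftrightarrow> is_perm n x \<and> avoids x y"
  unfolding Av_def by simp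

lemma contains_len: "contains x y \<Longrightarrow> length y \<le> length x"
  unfolding contains_def order_iso_def by (metis list_emb_length)

lemma avoids_small: "avoids x y \<Longrightarrow> avoids (small k x) y"
  unfolding avoids_def contains_def small_def
  using subseq_order.trans[OF _ subseq_filter_left] by blast

lemma Av_decomp: assumes "x \<in> Av n [y]" "1 \<le> n"
  shows "small (n-1) x \<in> Av (n-1) [y] \<and> (\<exists>i\<in>active_sites (small (n-1) x) y. x = ins_max (small (n-1) x) i)"
proof -
  have p: "is_perm n x" "avoids x y" using assms Av1 by auto
  obtain i where i: "1 \<le> i" "i \<le> n" "x = ins_max (small (n-1) x) i" using decomp p assms by blast
  have sp: "is_perm (n-1) (small (n-1) x)" using small_perm p by auto
  have "i \<in> active_sites (small (n-1) x) y" unfolding active_sites_def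
    using i p perm_len[OF sp] assms by auto
  then show ?thesis using i sp avoids_small p Av1 by metis
qed

lemma ins_Av: "w \<in> Av m [y] \<Longrightarrow> i \<in> active_sites w y \<Longrightarrow> ins_max w i \<in> Av (m+1) [y]"
  unfolding Av1 active_sites_def using ins_perm perm_len by auto

lemma sig_len: "length (signature x y) = length x - 1"
  unfolding signature_def by simp

lemma sig_rec: assumes "is_perm n x" "2 \<le> n"
  shows "signature x y = card (active_sites x y) # signature (small (n-1) x) y"
proof -
  have len: "length x = n" "length (small (n-1) x) = n-1"
    using assms perm_len small_perm by auto
  have u: "[1..<n] = 1 # [2..<n]"
  proof -
    have "1 < n" using assms by simp
    then show ?thesis by (simp only: upt_conv_Cons Suc_1)
  qed
  have u2: "[2..<n] = map Suc [1..<n-1]"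
  proof -
    have "map Suc [1..<n-1] = [Suc 1..<Suc (n-1)]" by (rule map_Suc_upt)
    moreover have "Suc (n-1) = n" using assms by simp
    ultimately show ?thesis by (simp only: Suc_1)
  qed
  have a1: "Act 1 x y = active_sites x y" unfolding Act_def using small_id assms len by simp
  have ac: "Act (Suc j) x y = Act j (small (n-1) x) y" if "j \<in> set [1..<n-1]" for j
  proof -
    have "n - j \<le> n - 1" using that by auto
    then have "small (n - j) (small (n-1) x) = small (n-j) x" by (rule small_small)
    moreover have "length x + 1 - Suc j = n - j" "length (small (n-1) x) + 1 - j = n - j"
      using len that by auto
    ultimately show ?thesis unfolding Act_def by simp
  qed
  have "signature x y = card (Act 1 x y) # map (\<lambda>j. card (Act (Suc j) x y)) [1..<n-1]"
    unfolding signature_def len u u2 by simp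
  also have "map (\<lambda>j. card (Act (Suc j) x y)) [1..<n-1] = signature (small (n-1) x) y"
    unfolding signature_def len using ac by (intro map_cong) auto
  finally show ?thesis using a1 by simp
qed

lemma act_single: "length y = 3 \<Longrightarrow> active_sites [1] y = {1,2}"
proof -
  assume a: "length y = 3"
  have "avoids (ins_max [1] i) y" for i
  proof -
    have "length (ins_max [1] i) = 2" using len_ins[of "[1]" i] by simp
    then show ?thesis unfolding avoids_def using contains_len[of "ins_max [1] i" y] a by linarith
  qed
  then have "active_sites [1] y = {1..length [1::nat] + 1}" unfolding active_sites_def by blast
  moreover have "{1..length [1::nat]+1} = {1,2::nat}" by (auto simp: numeral_2_eq_2)
  ultimately show ?thesis by simp
qed

lemma perm1: "is_perm 1 x \<longleftrightarrow> x = [1]"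
proof
  assume a: "is_perm 1 x"
  then have "length x = 1" by (rule perm_len)
  then obtain v where "x = [v]" by (metis One_nat_def length_0_conv length_Suc_conv)
  then show "x = [1]" using a unfolding is_perm_def by auto
next
  assume "x = [1]"
  then show "is_perm 1 x" unfolding is_perm_def by simp
qed

lemma perm0: "is_perm 0 x \<longleftrightarrow> x = []"
  unfolding is_perm_def by (cases x) auto

definition H :: "nat list \<Rightarrow> bool" where
  "H y \<longleftrightarrow> (\<forall>m w. 1 \<le> m \<longrightarrow> w \<in> Av m [y] \<longrightarrow>
     inj_on (\<lambda>i. card (active_sites (ins_max w i) y)) (active_sites w y) \<and>
     (\<forall>i\<in>active_sites w y. card (active_sites (ins_max w i) y) \<in> {2..card (active_sites w y)+1}))"

lemma finite_act: "finite (active_sites w y)"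
  unfolding active_sites_def by simp

lemma Av_perm: "x \<in> Av n [y] \<Longrightarrow> is_perm n x"
  by (simp add: Av1)

lemma sig_inj: assumes "H y"
  shows "x1 \<in> Av n [y] \<Longrightarrow> x2 \<in> Av n [y] \<Longrightarrow> signature x1 y = signature x2 y \<Longrightarrow> x1 = x2"
proof (induction n arbitrary: x1 x2 rule: less_induct)
  case (less n)
  show ?case
  proof (cases "n \<le> 1")
    case True
    then consider "n = 0" | "n = 1" by linarith
    then show ?thesis using less.prems(1,2) Av_perm perm0 perm1 by metis
  next
    case False
    let ?w1 = "small (n-1) x1" let ?w2 = "small (n-1) x2"
    obtain i1 where i1: "?w1 \<in> Av (n-1) [y]" "i1 \<in> active_sites ?w1 y" "x1 = ins_max ?w1 i1"
      using Av_decomp[OF less.prems(1)] False by auto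
    obtain i2 where i2: "?w2 \<in> Av (n-1) [y]" "i2 \<in> active_sites ?w2 y" "x2 = ins_max ?w2 i2"
      using Av_decomp[OF less.prems(2)] False by auto
    have s1: "signature x1 y = card (active_sites x1 y) # signature ?w1 y"
      using sig_rec[OF Av_perm[OF less.prems(1)]] False by auto
    have s2: "signature x2 y = card (active_sites x2 y) # signature ?w2 y"
      using sig_rec[OF Av_perm[OF less.prems(2)]] False by auto
    have "?w1 = ?w2" using less.IH[of "n-1" ?w1 ?w2] i1 i2 s1 s2 less.prems(3) False by simp
    moreover have "card (active_sites x1 y) = card (active_sites x2 y)" using s1 s2 less.prems(3) by simp
    moreover have "inj_on (\<lambda>i. card (active_sites (ins_max ?w1 i) y)) (active_sites ?w1 y)"
      using assms[unfolded H_def, rule_format, of "n-1" ?w1] i1(1) False by auto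
    ultimately have "i1 = i2" using i1 i2 by (metis inj_onD)
    then show ?thesis using i1 i2 \<open>?w1 = ?w2\<close> by simp
  qed
qed

lemma img_full: assumes "inj_on f S" "finite S" "\<forall>i\<in>S. f i \<in> {2..card S + 1}"
  shows "f ` S = {2..card S + 1}"
proof -
  have "f ` S \<subseteq> {2..card S + 1}" using assms(3) by auto
  moreover have "card (f ` S) = card {2..card S + 1}" using card_image[OF assms(1)] by simp
  ultimately show ?thesis using card_subset_eq by (metis finite_atLeastAtMost)
qed

lemma avoids_short: "length y = 3 \<Longrightarrow> length x < 3 \<Longrightarrow> avoids x y"
  unfolding avoids_def using contains_len by fastforce

lemma sig_exist: assumes "H y1" "H y2" "length y1 = 3" "length y2 = 3"
  shows "x \<in> Av n [y1] \<Longrightarrow> \<exists>x'\<in>Av n [y2]. signature x' y2 = signature x y1"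
proof (induction n arbitrary: x)
  case 0
  then have "x = []" using Av_perm perm0 by metis
  moreover have "[] \<in> Av 0 [y2]" unfolding Av1 perm0 using avoids_short assms by simp
  ultimately show ?case unfolding signature_def by auto
next
  case (Suc n)
  show ?case
  proof (cases "n = 0")
    case True
    then have "x = [1]" using Suc.prems Av_perm perm1 by (metis One_nat_def)
    moreover have "[1] \<in> Av 1 [y2]" unfolding Av1 perm1 using avoids_short assms by simp
    moreover have "signature [1] y2 = signature x y1" using \<open>x = [1]\<close> by (simp add: signature_def)
    ultimately show ?thesis using True by auto
  next
    case False
    let ?w = "small n x"
    obtain i where i: "?w \<in> Av n [y1]" "i \<in> active_sites ?w y1" "x = ins_max ?w i"
      using Av_decomp[OF Suc.prems] by auto
    obtain w' where w': "w' \<in> Av n [y2]" "signature w' y2 = signature ?w y1"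
      using Suc.IH i(1) by blast
    have k: "card (active_sites w' y2) = card (active_sites ?w y1)"
    proof (cases "n = 1")
      case True
      then have "w' = [1]" "?w = [1]" using w'(1) i(1) Av_perm perm1 by metis+
      then show ?thesis using act_single assms by simp
    next
      case False
      then have "2 \<le> n" using \<open>n \<noteq> 0\<close> by simp
      then show ?thesis using w'(2) sig_rec[OF Av_perm[OF w'(1)]] sig_rec[OF Av_perm[OF i(1)]] by simp
    qed
    let ?S = "active_sites w' y2"
    let ?f = "\<lambda>i. card (active_sites (ins_max w' i) y2)"
    have h2: "inj_on ?f ?S" "\<forall>i\<in>?S. ?f i \<in> {2..card ?S+1}"
      using assms(2)[unfolded H_def, rule_format, of n w'] w'(1) False by auto
    have "card (active_sites x y1) \<in> {2..card (active_sites ?w y1)+1}"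
      using assms(1)[unfolded H_def, rule_format, of n ?w] i False by auto
    then have "card (active_sites x y1) \<in> ?f ` ?S" using img_full[OF h2(1) finite_act h2(2)] k by simp
    then obtain i' where i': "i' \<in> ?S" "?f i' = card (active_sites x y1)" by auto
    let ?x' = "ins_max w' i'"
    have x': "?x' \<in> Av (Suc n) [y2]" using ins_Av[OF w'(1) i'(1)] by simp
    have "small n ?x' = w'" using small_ins Av_perm[OF w'(1)] by blast
    then have "signature ?x' y2 = signature x y1"
      using sig_rec[OF Av_perm[OF x']] sig_rec[OF Av_perm[OF Suc.prems]] False i'(2) w'(2) by simp
    then show ?thesis using x' by blast
  qed
qed

definition maxfirst :: "nat list \<Rightarrow> bool" where
  "maxfirst x \<longleftrightarrow> x \<noteq> [] \<and> x!0 = length x"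

locale insctx =
  fixes m :: nat and w :: "nat list" and i :: nat
  assumes pw: "is_perm m w" and i1: "1 \<le> i" and i2: "i \<le> m+1"
begin

abbreviation "z \<equiv> ins_max w i"
abbreviation "p \<equiv> i - 1"

lemma lw: "length w = m" using perm_len pw by simp
lemma lz: "length z = m+1" using len_ins lw by simp

lemma z_lt: "t < p \<Longrightarrow> z!t = w!t"
  using nth_ins[of i w t] i1 i2 lw by auto
lemma z_eq: "z!p = m+1"
  using nth_ins[of i w p] i1 i2 lw by auto
lemma z_gt: "p < t \<Longrightarrow> t \<le> m \<Longrightarrow> z!t = w!(t-1)"
  using nth_ins[of i w t] i1 i2 lw by auto

lemma w_val: "t < m \<Longrightarrow> 1 \<le> w!t \<and> w!t \<le> m"
  using perm_nth pw by blast
lemma w_inj: "s < m \<Longrightarrow> t < m \<Longrightarrow> w!s = w!t \<longleftrightarrow> s = t"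
  using perm_nth_inj pw by blast

lemma z_val: "t \<le> m \<Longrightarrow> t \<noteq> p \<Longrightarrow> z!t \<le> m"
proof -
  assume t: "t \<le> m" "t \<noteq> p"
  show ?thesis
  proof (cases "t < p")
    case True
    then show ?thesis using z_lt w_val i2 t by simp
  next
    case False
    then have "p < t" using t by simp
    then show ?thesis using z_gt[of t] w_val[of "t-1"] t by simp
  qed
qed

lemma z_le: "t \<le> m \<Longrightarrow> z!t \<le> m+1"
proof (cases "t = p")
  case True
  then show ?thesis using z_eq by simp
next
  case False
  assume "t \<le> m"
  then have "z!t \<le> m" using z_val False by blast
  then show ?thesis by simp
qed

lemma z_down: "t \<le> m \<Longrightarrow> t \<noteq> p \<Longrightarrow> z!t = w!(if t < p then t else t-1)"
  using z_lt z_gt by auto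

lemma z_up: "t < m \<Longrightarrow> z!(if t < p then t else t+1) = w!t"
  using z_lt z_gt[of "t+1"] by auto

end

definition asc :: "nat list \<Rightarrow> nat \<Rightarrow> bool" where
  "asc w s \<longleftrightarrow> (\<exists>a b. a < b \<and> b < s \<and> w!a < w!b)"

lemma asc_mono: "asc w s \<Longrightarrow> s \<le> s' \<Longrightarrow> asc w s'"
  unfolding asc_def by (meson less_le_trans)

lemma (in insctx) p123_ins: "p123 z \<longleftrightarrow> p123 w \<or> asc w p"
proof
  assume "p123 z"
  then obtain a b c where abc: "a<b" "b<c" "c<m+1" "z!a<z!b" "z!b<z!c"
    unfolding p123_def using lz by auto
  have bp: "b \<noteq> p"
  proof
    assume "b = p"
    then have "c \<noteq> p" using abc by simp
    then have "z!c \<le> m" using z_val abc by simp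
    then show False using abc \<open>b = p\<close> z_eq by simp
  qed
  have ap: "a \<noteq> p"
  proof
    assume "a = p"
    have "z!b \<le> m" using z_val bp abc by simp
    then show False using abc \<open>a = p\<close> z_eq by simp
  qed
  show "p123 w \<or> asc w p"
  proof (cases "c = p")
    case True
    then have "asc w p" unfolding asc_def using abc z_lt by (intro exI[of _ a] exI[of _ b]) auto
    then show ?thesis by simp
  next
    case False
    let ?d = "\<lambda>t. if t < p then t else t-1"
    have "?d a < ?d b" "?d b < ?d c" "?d c < m" using abc ap bp False i2 by auto
    moreover have "z!a = w!(?d a)" "z!b = w!(?d b)" "z!c = w!(?d c)"
      using z_down abc ap bp False by auto
    ultimately have "p123 w" unfolding p123_def lw using abc
      by (intro exI[of _ "?d a"] exI[of _ "?d b"] exI[of _ "?d c"]) auto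
    then show ?thesis by simp
  qed
next
  assume "p123 w \<or> asc w p"
  then show "p123 z"
  proof
    assume "p123 w"
    then obtain a b c where abc: "a<b" "b<c" "c<m" "w!a<w!b" "w!b<w!c"
      unfolding p123_def using lw by auto
    let ?u = "\<lambda>t. if t < p then t else t+1"
    have "?u a < ?u b" "?u b < ?u c" "?u c < m+1" using abc by auto
    moreover have "z!(?u a) = w!a" "z!(?u b) = w!b" "z!(?u c) = w!c"
      using z_up abc by auto
    ultimately show "p123 z" unfolding p123_def lz using abc
      by (intro exI[of _ "?u a"] exI[of _ "?u b"] exI[of _ "?u c"]) auto
  next
    assume "asc w p"
    then obtain a b where ab: "a < b" "b < p" "w!a < w!b" unfolding asc_def by auto
    have "w!b \<le> m" using w_val ab i2 by simp
    then have "z!a < z!b" "z!b < z!p" using ab z_lt z_eq by auto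
    then show "p123 z" unfolding p123_def lz using ab i2
      by (intro exI[of _ a] exI[of _ b] exI[of _ p]) auto
  qed
qed

definition cross :: "nat list \<Rightarrow> nat \<Rightarrow> bool" where
  "cross w s \<longleftrightarrow> (\<exists>a c. a < s \<and> s \<le> c \<and> c < length w \<and> w!a < w!c)"

lemma (in insctx) p132_ins: "p132 z \<longleftrightarrow> p132 w \<or> cross w p"
proof
  assume "p132 z"
  then obtain a b c where abc: "a<b" "b<c" "c<m+1" "z!a<z!c" "z!c<z!b"
    unfolding p132_def using lz by auto
  have cp: "c \<noteq> p"
  proof
    assume "c = p"
    then have "b \<noteq> p" using abc by simp
    then have "z!b \<le> m" using z_val abc by simp
    then show False using abc \<open>c = p\<close> z_eq by simp
  qed
  have ap: "a \<noteq> p"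
  proof
    assume "a = p"
    have "z!c \<le> m" using z_val cp abc by simp
    then show False using abc \<open>a = p\<close> z_eq by simp
  qed
  show "p132 w \<or> cross w p"
  proof (cases "b = p")
    case True
    then have "a < p" "p < c" using abc by auto
    then have "z!a = w!a" "z!c = w!(c-1)" using z_lt z_gt abc by auto
    then have "cross w p" unfolding cross_def lw using abc \<open>a < p\<close> \<open>p < c\<close>
      by (intro exI[of _ a] exI[of _ "c-1"]) auto
    then show ?thesis by simp
  next
    case False
    let ?d = "\<lambda>t. if t < p then t else t-1"
    have "?d a < ?d b" "?d b < ?d c" "?d c < m" using abc ap cp False i2 by auto
    moreover have "z!a = w!(?d a)" "z!b = w!(?d b)" "z!c = w!(?d c)"
      using z_down abc ap cp False by auto
    ultimately have "p132 w" unfolding p132_def lw using abc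
      by (intro exI[of _ "?d a"] exI[of _ "?d b"] exI[of _ "?d c"]) auto
    then show ?thesis by simp
  qed
next
  assume "p132 w \<or> cross w p"
  then show "p132 z"
  proof
    assume "p132 w"
    then obtain a b c where abc: "a<b" "b<c" "c<m" "w!a<w!c" "w!c<w!b"
      unfolding p132_def using lw by auto
    let ?u = "\<lambda>t. if t < p then t else t+1"
    have "?u a < ?u b" "?u b < ?u c" "?u c < m+1" using abc by auto
    moreover have "z!(?u a) = w!a" "z!(?u b) = w!b" "z!(?u c) = w!c"
      using z_up abc by auto
    ultimately show "p132 z" unfolding p132_def lz using abc
      by (intro exI[of _ "?u a"] exI[of _ "?u b"] exI[of _ "?u c"]) auto
  next
    assume "cross w p"
    then obtain a c where ac: "a < p" "p \<le> c" "c < m" "w!a < w!c" unfolding cross_def lw by auto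
    have "w!c \<le> m" using w_val ac by simp
    moreover have "z!(c+1) = w!c" using z_gt[of "c+1"] ac by simp
    ultimately have "z!a < z!(c+1)" "z!(c+1) < z!p" using ac z_lt z_eq by auto
    then show "p132 z" unfolding p132_def lz using ac
      by (intro exI[of _ a] exI[of _ p] exI[of _ "c+1"]) auto
  qed
qed

abbreviation "A3 w \<equiv> active_sites w [1,2,3]"

lemma avoid123: "avoids x [1,2,3] \<longleftrightarrow> \<not> p123 x"
  unfolding avoids_def contains_123 by simp

lemma act123: assumes "is_perm m w" "\<not> p123 w"
  shows "A3 w = {i\<in>{1..m+1}. \<not> asc w (i-1)}"
proof -
  have "avoids (ins_max w i) [1,2,3] \<longleftrightarrow> \<not> asc w (i-1)" if "i \<in> {1..m+1}" for i
  proof -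
    interpret insctx m w i using assms(1) that by unfold_locales auto
    show ?thesis using p123_ins assms(2) avoid123 by simp
  qed
  then show ?thesis unfolding active_sites_def using perm_len[OF assms(1)] by auto
qed

lemma act123_le_card: assumes "is_perm m w" "\<not> p123 w" "i \<in> A3 w"
  shows "i \<le> card (A3 w)"
proof -
  have "{1..i} \<subseteq> A3 w"
  proof
    fix t assume t: "t \<in> {1..i}"
    have "\<not> asc w (i-1)" "i \<le> m+1" using assms act123 by auto
    have "t-1 \<le> i-1" using t by auto
    then have "\<not> asc w (t-1)" using \<open>\<not> asc w (i-1)\<close> asc_mono[of w "t-1" "i-1"] by blast
    then show "t \<in> A3 w" using act123[OF assms(1,2)] t \<open>i \<le> m+1\<close> by auto
  qed
  then have "card {1..i} \<le> card (A3 w)" using finite_act card_mono by metis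
  then show ?thesis by simp
qed

lemma ins1: "ins_max w 1 = (length w + 1) # w"
  unfolding ins_max_def by simp

lemma asc_cons: assumes "is_perm m w" "1 \<le> s" "s \<le> m+1"
  shows "asc ((m+1) # w) s \<longleftrightarrow> asc w (s-1)"
proof
  assume "asc ((m+1) # w) s"
  then obtain a b where ab: "a < b" "b < s" "((m+1)#w)!a < ((m+1)#w)!b" unfolding asc_def by auto
  have "a \<noteq> 0"
  proof
    assume "a = 0"
    then have "w!(b-1) > m" using ab by (cases b) auto
    moreover have "b - 1 < m" using ab assms by auto
    ultimately show False using perm_nth[OF assms(1)] by (meson not_le)
  qed
  then show "asc w (s-1)" unfolding asc_def using ab
    by (intro exI[of _ "a-1"] exI[of _ "b-1"]) (cases a; cases b; auto)
next
  assume "asc w (s-1)"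
  then obtain a b where ab: "a < b" "b < s-1" "w!a < w!b" unfolding asc_def by auto
  then show "asc ((m+1) # w) s" unfolding asc_def
    by (intro exI[of _ "a+1"] exI[of _ "b+1"]) auto
qed

lemma suc_img: "0 < t \<Longrightarrow> (t \<in> Suc ` S) = (t - 1 \<in> S)"
  by (cases t) auto

lemma act123_1: assumes "is_perm m w" "\<not> p123 w"
  shows "card (A3 (ins_max w 1)) = card (A3 w) + 1"
proof -
  interpret insctx m w 1 using assms(1) by unfold_locales auto
  have np: "\<not> p123 z" using p123_ins assms(2) asc_def by simp
  have pz: "is_perm (m+1) z" using ins_perm assms(1) by simp
  have z: "z = (m+1) # w" using ins1 lw by simp
  have "A3 z = insert 1 (Suc ` A3 w)"
  proof -
    have "A3 z = {t\<in>{1..m+2}. \<not> asc z (t-1)}" using act123[OF pz np] by simp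
    also have "\<dots> = insert 1 (Suc ` {i\<in>{1..m+1}. \<not> asc w (i-1)})"
    proof (rule set_eqI)
      fix t
      show "t \<in> {t\<in>{1..m+2}. \<not> asc z (t-1)} \<longleftrightarrow> t \<in> insert 1 (Suc ` {i\<in>{1..m+1}. \<not> asc w (i-1)})"
      proof (cases "t \<le> 1")
        case True
        then show ?thesis unfolding asc_def by auto
      next
        case False
        then have "asc z (t-1) \<longleftrightarrow> asc w (t-1-1)" if "t \<le> m+2"
          using asc_cons[OF assms(1), of "t-1"] z that by simp
        moreover have "t \<in> Suc ` {i\<in>{1..m+1}. \<not> asc w (i-1)} \<longleftrightarrow> t-1 \<in> {i\<in>{1..m+1}. \<not> asc w (i-1)}"
          using False suc_img[of t] by simp
        ultimately show ?thesis using False by auto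
      qed
    qed
    finally show ?thesis using act123[OF assms] by simp
  qed
  moreover have "1 \<notin> Suc ` A3 w" unfolding active_sites_def by auto
  ultimately show ?thesis using finite_act card_image[of Suc "A3 w"] by simp
qed

lemma act123_i: assumes "is_perm m w" "\<not> p123 w" "i \<in> A3 w" "2 \<le> i"
  shows "card (A3 (ins_max w i)) = i"
proof -
  have im: "i \<le> m+1" using assms perm_len unfolding active_sites_def by auto
  interpret insctx m w i using assms(1) im assms(4) by unfold_locales auto
  have np: "\<not> p123 z" using assms(3) avoid123 unfolding active_sites_def by auto
  have pz: "is_perm (m+1) z" using ins_perm assms(1) i1 i2 by simp
  have nasc: "\<not> asc w (i-1)" using assms act123 by auto
  have "A3 z = {t\<in>{1..m+2}. \<not> asc z (t-1)}" using act123[OF pz np] by simp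
  also have "\<dots> = {1..i}"
  proof (rule set_eqI)
    fix t
    show "t \<in> {t\<in>{1..m+2}. \<not> asc z (t-1)} \<longleftrightarrow> t \<in> {1..i}"
    proof (cases "t \<le> i")
      case True
      have "\<not> asc z (t-1)"
      proof
        assume "asc z (t-1)"
        then obtain a b where ab: "a < b" "b < t-1" "z!a < z!b" unfolding asc_def by auto
        then have "w!a < w!b" using z_lt True by auto
        then have "asc w (i-1)" unfolding asc_def using ab True by (intro exI[of _ a] exI[of _ b]) auto
        then show False using nasc by simp
      qed
      then show ?thesis using True im by auto
    next
      case False
      have "z!(p-1) = w!(p-1)" using z_lt assms(4) by simp
      moreover have "w!(p-1) \<le> m" using w_val assms(4) im by simp
      ultimately have "z!(p-1) < z!p" using z_eq by simp
      then have "asc z (t-1)" unfolding asc_def using False assms(4)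
        by (intro exI[of _ "p-1"] exI[of _ p]) auto
      then show ?thesis using False by auto
    qed
  qed
  finally show ?thesis by simp
qed

lemma H123: "H [1,2,3]"
  unfolding H_def
proof (intro allI impI conjI)
  fix m w assume mw: "1 \<le> m" "w \<in> Av m [[1,2,3]]"
  have pw: "is_perm m w" and np: "\<not> p123 w" using mw Av1 avoid123 by auto
  let ?k = "card (A3 w)"
  have f: "card (A3 (ins_max w i)) = (if i = 1 then ?k + 1 else i)" if "i \<in> A3 w" for i
  proof (cases "i = 1")
    case True then show ?thesis using act123_1[OF pw np] by simp
  next
    case False
    then have "2 \<le> i" using that unfolding active_sites_def by auto
    then show ?thesis using act123_i[OF pw np that] False by simp
  qed
  have le: "i \<le> ?k" if "i \<in> A3 w" for i using act123_le_card[OF pw np that] .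
  have ge: "1 \<le> i" if "i \<in> A3 w" for i using that unfolding active_sites_def by auto
  show "inj_on (\<lambda>i. card (A3 (ins_max w i))) (A3 w)"
  proof (rule inj_onI)
    fix i j assume ij: "i \<in> A3 w" "j \<in> A3 w" "card (A3 (ins_max w i)) = card (A3 (ins_max w j))"
    then show "i = j" using f[OF ij(1)] f[OF ij(2)] le[OF ij(1)] le[OF ij(2)]
      by (auto split: if_splits)
  qed
  show "\<forall>i\<in>A3 w. card (A3 (ins_max w i)) \<in> {2..?k + 1}"
  proof
    fix i assume i: "i \<in> A3 w"
    have "\<not> asc w (2-1)" unfolding asc_def by auto
    then have "2 \<in> A3 w" using act123[OF pw np] mw(1) by auto
    then have "2 \<le> ?k" using le by blast
    then show "card (A3 (ins_max w i)) \<in> {2..?k + 1}" using f[OF i] le[OF i] ge[OF i] by auto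
  qed
qed

lemma (in insctx) mf_ins: "1 \<le> m \<Longrightarrow> maxfirst z \<longleftrightarrow> i = 1"
proof -
  assume m: "1 \<le> m"
  show ?thesis
  proof (cases "i = 1")
    case True
    then have "z!0 = m+1" using z_eq by simp
    then show ?thesis using lz True unfolding maxfirst_def by auto
  next
    case False
    then have "0 < p" using i1 by simp
    then have "z!0 \<le> m" using z_lt w_val m by simp
    then show ?thesis using False lz unfolding maxfirst_def by simp
  qed
qed

lemma maxfirst_perm: "is_perm m w \<Longrightarrow> 1 \<le> m \<Longrightarrow> maxfirst w \<longleftrightarrow> w!0 = m"
  unfolding maxfirst_def using perm_len by fastforce

lemma pos_max: assumes "is_perm m w" "1 \<le> m" shows "\<exists>q<m. w!q = m"
proof -
  have "m \<in> set w" using assms unfolding is_perm_def by auto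
  then obtain q where "q < length w" "w!q = m" by (auto simp: in_set_conv_nth)
  then show ?thesis using perm_len[OF assms(1)] by auto
qed

lemma kq123: assumes "is_perm m w" "\<not> p123 w" "q < m" "w!q = m" "1 \<le> q"
  shows "card (A3 w) = q+1"
proof -
  have "A3 w = {1..q+1}"
  proof -
    have "A3 w = {t\<in>{1..m+1}. \<not> asc w (t-1)}" using act123[OF assms(1,2)] .
    also have "\<dots> = {1..q+1}"
    proof (rule set_eqI)
      fix t
      show "t \<in> {t\<in>{1..m+1}. \<not> asc w (t-1)} \<longleftrightarrow> t \<in> {1..q+1}"
      proof (cases "t \<le> q+1")
        case True
        have "\<not> asc w (t-1)"
        proof
          assume "asc w (t-1)"
          then obtain a b where ab: "a<b" "b<t-1" "w!a<w!b" unfolding asc_def by auto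
          have bq: "b < q" "b < m" using ab True assms(3) by auto
          have "w!b \<le> m" using perm_nth[OF assms(1) bq(2)] by simp
          moreover have "w!b \<noteq> m" using perm_nth_inj[OF assms(1) bq(2) assms(3)] bq assms(4) by simp
          ultimately have "w!b < w!q" using assms(4) by simp
          then have "p123 w" unfolding p123_def using ab True assms(3,4) perm_len[OF assms(1)]
            by (intro exI[of _ a] exI[of _ b] exI[of _ q]) auto
          then show False using assms(2) by simp
        qed
        then show ?thesis using True assms(3) by auto
      next
        case False
        have q1: "q-1 < m" "q - 1 \<noteq> q" using assms(3,5) by auto
        have "w!(q-1) \<le> m" using perm_nth[OF assms(1) q1(1)] by simp
        moreover have "w!(q-1) \<noteq> m" using perm_nth_inj[OF assms(1) q1(1) assms(3)] q1 assms(4) by simp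
        ultimately have "w!(q-1) < w!q" using assms(4) by simp
        then have "asc w (t-1)" unfolding asc_def using False assms(4,5)
          by (intro exI[of _ "q-1"] exI[of _ q]) auto
        then show ?thesis using False by auto
      qed
    qed
    finally show ?thesis .
  qed
  then show ?thesis by simp
qed

lemma Fa123': assumes "w \<in> Av m [[1,2,3]]" "1 \<le> m" "i \<in> A3 w" "x = ins_max w i"
  shows "maxfirst x \<longleftrightarrow> card (A3 x) = card (A3 w) + 1"
proof -
  have pw: "is_perm m w" and np: "\<not> p123 w" using assms(1) Av1 avoid123 by auto
  have ir: "1 \<le> i" "i \<le> m+1" using assms(3) perm_len[OF pw] unfolding active_sites_def by auto
  interpret insctx m w i using pw ir by unfold_locales auto
  show ?thesis
  proof (cases "i = 1")
    case True
    then show ?thesis using act123_1[OF pw np] mf_ins assms(2,4) by simp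
  next
    case False
    then have "card (A3 x) = i" "i \<le> card (A3 w)"
      using act123_i[OF pw np assms(3)] act123_le_card[OF pw np assms(3)] ir assms(4) by auto
    then show ?thesis using mf_ins assms(2,4) False by simp
  qed
qed

lemma Fa123: assumes "x \<in> Av n [[1,2,3]]" "2 \<le> n"
  shows "maxfirst x \<longleftrightarrow> card (A3 x) = card (A3 (small (n-1) x)) + 1"
proof -
  obtain i where i: "small (n-1) x \<in> Av (n-1) [[1,2,3]]" "i \<in> A3 (small (n-1) x)" "x = ins_max (small (n-1) x) i"
    using Av_decomp[OF assms(1)] assms(2) by auto
  show ?thesis using Fa123'[OF i(1) _ i(2) i(3)] assms(2) by simp
qed

lemma Fb123': assumes "w \<in> Av m [[1,2,3]]" "1 \<le> m" "i \<in> A3 w" "x = ins_max w i"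
  shows "has_132star x \<longleftrightarrow> has_132star w \<or> (\<not> maxfirst w \<and> card (A3 x) = card (A3 w))"
proof -
  have m1: "1 \<le> m" using assms by simp
  have pw: "is_perm m w" and np: "\<not> p123 w" using assms(1) Av1 avoid123 by auto
  have ir: "1 \<le> i" "i \<le> m+1" using assms(3) perm_len[OF pw] unfolding active_sites_def by auto
  have xA: "x \<in> Av (m+1) [[1,2,3]]" using ins_Av[OF assms(1,3)] assms(4) by simp
  have npx: "\<not> p123 x" using xA Av1 avoid123 by auto
  interpret insctx m w i using pw ir by unfold_locales auto
  let ?w = w
  let ?k = "card (A3 ?w)"
  have L: "card (A3 x) = (if i = 1 then ?k + 1 else i)"
    using act123_1[OF pw np] act123_i[OF pw np assms(3)] ir assms(4) by auto
  have ile: "i \<le> ?k" using act123_le_card[OF pw np assms(3)] .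
  have xz: "x = z" using assms(4) by simp
  show ?thesis
  proof
    assume "has_132star x"
    then obtain a b where ab: "a < b" "b+1 < m+1" "x!a < x!(b+1)" "x!b = x!(b+1)+1"
      unfolding has_132star_def using lz xz by auto
    have bp1: "b+1 \<noteq> p" using z_le[of b] z_eq ab xz by auto
    have ap: "a \<noteq> p" using z_le[of "b+1"] z_eq ab xz by auto
    show "has_132star ?w \<or> (\<not> maxfirst ?w \<and> card (A3 x) = ?k)"
    proof (cases "b = p")
      case True
      have wb: "?w!b = m" using z_gt[of "b+1"] z_eq True ab xz by simp
      have "b < m" using ab by simp
      have "?k = b+1" using kq123[OF pw np \<open>b < m\<close> wb] ab by simp
      moreover have "\<not> maxfirst ?w" using maxfirst_perm[OF pw m1] wb perm_nth_inj[OF pw, of 0 b] ab by auto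
      ultimately show ?thesis using L True ab by auto
    next
      case False
      let ?d = "\<lambda>t. if t < p then t else t-1"
      have d: "?d a < ?d b" "?d (b+1) = ?d b + 1" "?d b + 1 < m" using ab ap bp1 False i2 by auto
      have "x!a = ?w!(?d a)" "x!b = ?w!(?d b)" "x!(b+1) = ?w!(?d (b+1))"
        using z_down ab ap bp1 False xz by auto
      then have "has_132star ?w" unfolding has_132star_def lw using d ab
        by (intro exI[of _ "?d a"] exI[of _ "?d b"]) auto
      then show ?thesis by simp
    qed
  next
    assume "has_132star ?w \<or> (\<not> maxfirst ?w \<and> card (A3 x) = ?k)"
    then show "has_132star x"
    proof
      assume "has_132star ?w"
      then obtain a b where ab: "a < b" "b+1 < m" "?w!a < ?w!(b+1)" "?w!b = ?w!(b+1)+1"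
        unfolding has_132star_def using lw by auto
      show ?thesis
      proof (cases "p = b+1")
        case True
        have "?w!b \<le> m" using w_val[of b] ab by simp
        then have "p123 x" unfolding p123_def using ab True z_lt z_eq xz lz
          by (intro exI[of _ a] exI[of _ b] exI[of _ p]) auto
        then show ?thesis using npx by simp
      next
        case False
        let ?u = "\<lambda>t. if t < p then t else t+1"
        have u: "?u a < ?u b" "?u (b+1) = ?u b + 1" "?u b + 1 < m+1" using ab False by auto
        have "x!(?u a) = ?w!a" "x!(?u b) = ?w!b" "x!(?u (b+1)) = ?w!(b+1)"
          using z_up[of a] z_up[of b] z_up[of "b+1"] ab xz by auto
        then show "has_132star x" unfolding has_132star_def lz xz using u ab
          by (intro exI[of _ "?u a"] exI[of _ "?u b"]) auto
      qed
    next
      assume a: "\<not> maxfirst ?w \<and> card (A3 x) = ?k"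
      then have "i \<noteq> 1" using L by auto
      then have "i = ?k" using L a by simp
      obtain q where q: "q < m" "?w!q = m" using pos_max[OF pw m1] by blast
      have "q \<noteq> 0"
      proof
        assume "q = 0"
        then have "maxfirst ?w" using q maxfirst_perm[OF pw m1] by simp
        then show False using a by simp
      qed
      then have "?k = q+1" using kq123[OF pw np q] by simp
      then have pq: "p = q" using \<open>i = ?k\<close> by simp
      have "?w!0 \<le> m" "?w!0 \<noteq> m" using w_val perm_nth_inj[OF pw, of 0 q] q \<open>q \<noteq> 0\<close> by auto
      moreover have "x!0 = ?w!0" "x!q = m+1" "x!(q+1) = m" using z_lt z_eq z_gt[of "q+1"] pq q \<open>q \<noteq> 0\<close> xz by auto
      ultimately show "has_132star x" unfolding has_132star_def lz xz using q \<open>q \<noteq> 0\<close>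
        by (intro exI[of _ 0] exI[of _ q]) (auto simp: xz)
    qed
  qed
qed

lemma Fb123: assumes "x \<in> Av n [[1,2,3]]" "2 \<le> n"
  shows "has_132star x \<longleftrightarrow> has_132star (small (n-1) x) \<or>
    (\<not> maxfirst (small (n-1) x) \<and> card (A3 x) = card (A3 (small (n-1) x)))"
proof -
  obtain i where i: "small (n-1) x \<in> Av (n-1) [[1,2,3]]" "i \<in> A3 (small (n-1) x)" "x = ins_max (small (n-1) x) i"
    using Av_decomp[OF assms(1)] assms(2) by auto
  show ?thesis using Fb123'[OF i(1) _ i(2) i(3)] assms(2) by simp
qed

abbreviation "A2 w \<equiv> active_sites w [1,3,2]"

lemma avoid132: "avoids x [1,3,2] \<longleftrightarrow> \<not> p132 x"
  unfolding avoids_def contains_132 by simp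

lemma act132: assumes "is_perm m w" "\<not> p132 w"
  shows "A2 w = {i\<in>{1..m+1}. \<not> cross w (i-1)}"
proof -
  have "avoids (ins_max w i) [1,3,2] \<longleftrightarrow> \<not> cross w (i-1)" if "i \<in> {1..m+1}" for i
  proof -
    interpret insctx m w i using assms(1) that by unfold_locales auto
    show ?thesis using p132_ins assms(2) avoid132 by simp
  qed
  then show ?thesis unfolding active_sites_def using perm_len[OF assms(1)] by auto
qed

lemma one_in_A2: assumes "is_perm m w" "\<not> p132 w" shows "1 \<in> A2 w"
  using act132[OF assms] unfolding cross_def by auto

lemma A2_ge1: "j \<in> A2 w \<Longrightarrow> 1 \<le> j"
  unfolding active_sites_def by auto

lemma act132_ins: assumes "is_perm m w" "\<not> p132 w" "i \<in> A2 w"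
  shows "A2 (ins_max w i) = insert 1 (Suc ` {j\<in>A2 w. i \<le> j})"
proof -
  have ir: "1 \<le> i" "i \<le> m+1" using assms(3) perm_len[OF assms(1)] unfolding active_sites_def by auto
  interpret insctx m w i using assms(1) ir by unfold_locales auto
  have np: "\<not> p132 z" using assms(3) avoid132 unfolding active_sites_def by auto
  have pz: "is_perm (m+1) z" using ins_perm assms(1) i1 i2 by simp
  have "A2 z = {t\<in>{1..m+1+1}. \<not> cross z (t-1)}" using act132[OF pz np] .
  also have "\<dots> = insert 1 (Suc ` {j\<in>A2 w. i \<le> j})"
  proof (rule set_eqI)
    fix t
    show "t \<in> {t\<in>{1..m+1+1}. \<not> cross z (t-1)} \<longleftrightarrow> t \<in> insert 1 (Suc ` {j\<in>A2 w. i \<le> j})"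
    proof (cases "t \<le> 1")
      case True
      then show ?thesis unfolding cross_def using A2_ge1 by auto
    next
      case False
      then have t2: "2 \<le> t" by simp
      have img: "t \<in> Suc ` {j\<in>A2 w. i \<le> j} \<longleftrightarrow> t-1 \<in> A2 w \<and> i \<le> t-1"
        using suc_img[of t] t2 by simp
      show ?thesis
      proof (cases "t \<le> i")
        case True
        have "z!0 = w!0" using z_lt t2 True by simp
        moreover have "w!0 \<le> m" using w_val[of 0] ir t2 True by simp
        ultimately have "cross z (t-1)" unfolding cross_def lz using t2 True z_eq ir
          by (intro exI[of _ 0] exI[of _ p]) auto
        then show ?thesis using img True t2 by auto
      next
        case False
        have cc: "cross z (t-1) \<longleftrightarrow> cross w (t-1-1)"
        proof
          assume "cross z (t-1)"
          then obtain a c where ac: "a < t-1" "t-1 \<le> c" "c < m+1" "z!a < z!c" unfolding cross_def lz by auto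
          have cp: "p < c" using ac False by simp
          have zc: "z!c = w!(c-1)" using z_gt cp ac by simp
          have "z!c \<le> m" using z_val[of c] cp ac by simp
          then have ap: "a \<noteq> p" using ac z_eq by auto
          let ?d = "if a < p then a else a - 1"
          have "z!a = w!?d" using z_down[of a] ap ac by simp
          moreover have "?d < t-1-1" "t-1-1 \<le> c-1" "c-1 < m" using ac ap False by auto
          ultimately show "cross w (t-1-1)" unfolding cross_def lw using ac zc
            by (intro exI[of _ ?d] exI[of _ "c-1"]) auto
        next
          assume "cross w (t-1-1)"
          then obtain a c where ac: "a < t-1-1" "t-1-1 \<le> c" "c < m" "w!a < w!c" unfolding cross_def lw by auto
          let ?u = "if a < p then a else a + 1"
          have "z!?u = w!a" using z_up[of a] ac by simp
          moreover have "z!(c+1) = w!c" using z_gt[of "c+1"] ac False by simp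
          moreover have "?u < t-1" "t-1 \<le> c+1" "c+1 < m+1" using ac False by auto
          ultimately show "cross z (t-1)" unfolding cross_def lz using ac
            by (intro exI[of _ ?u] exI[of _ "c+1"]) auto
        qed
        have "t-1 \<in> A2 w \<longleftrightarrow> t-1 \<in> {1..m+1} \<and> \<not> cross w (t-1-1)" using act132[OF assms(1,2)] by auto
        then show ?thesis using img cc False t2 by auto
      qed
    qed
  qed
  finally show ?thesis .
qed

lemma card_A2_ins: assumes "is_perm m w" "\<not> p132 w" "i \<in> A2 w"
  shows "card (A2 (ins_max w i)) = card {j\<in>A2 w. i \<le> j} + 1"
proof -
  have "1 \<notin> Suc ` {j\<in>A2 w. i \<le> j}" using A2_ge1 by auto
  moreover have "finite {j\<in>A2 w. i \<le> j}" using finite_act by simp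
  ultimately show ?thesis using act132_ins[OF assms] card_image[of Suc] by simp
qed

lemma H132: "H [1,3,2]"
  unfolding H_def
proof (intro allI impI conjI)
  fix m w assume mw: "1 \<le> m" "w \<in> Av m [[1,3,2]]"
  have pw: "is_perm m w" and np: "\<not> p132 w" using mw Av1 avoid132 by auto
  let ?S = "A2 w"
  have fin: "finite ?S" by (rule finite_act)
  show "inj_on (\<lambda>i. card (A2 (ins_max w i))) ?S"
  proof (rule inj_onI)
    fix i j assume ij: "i \<in> ?S" "j \<in> ?S" "card (A2 (ins_max w i)) = card (A2 (ins_max w j))"
    have e: "card {t\<in>?S. i \<le> t} = card {t\<in>?S. j \<le> t}" using ij card_A2_ins[OF pw np] by simp
    show "i = j"
    proof (rule ccontr)
      assume "i \<noteq> j"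
      then consider "i < j" | "j < i" by linarith
      then show False
      proof cases
        case 1
        have sub: "{t\<in>?S. j \<le> t} \<subseteq> {t\<in>?S. i \<le> t}" using 1 by auto
        have "i \<notin> {t\<in>?S. j \<le> t}" "i \<in> {t\<in>?S. i \<le> t}" using 1 ij by auto
        then have "{t\<in>?S. j \<le> t} \<subset> {t\<in>?S. i \<le> t}" using sub by blast
        then have "card {t\<in>?S. j \<le> t} < card {t\<in>?S. i \<le> t}"
          by (rule psubset_card_mono[rotated]) (use fin in auto)
        then show False using e by simp
      next
        case 2
        have sub: "{t\<in>?S. i \<le> t} \<subseteq> {t\<in>?S. j \<le> t}" using 2 by auto
        have "j \<notin> {t\<in>?S. i \<le> t}" "j \<in> {t\<in>?S. j \<le> t}" using 2 ij by auto
        then have "{t\<in>?S. i \<le> t} \<subset> {t\<in>?S. j \<le> t}" using sub by blast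
        then have "card {t\<in>?S. i \<le> t} < card {t\<in>?S. j \<le> t}"
          by (rule psubset_card_mono[rotated]) (use fin in auto)
        then show False using e by simp
      qed
    qed
  qed
  show "\<forall>i\<in>?S. card (A2 (ins_max w i)) \<in> {2..card ?S + 1}"
  proof
    fix i assume i: "i \<in> ?S"
    have "card {t\<in>?S. i \<le> t} \<le> card ?S" using fin by (intro card_mono) auto
    moreover have "card {t\<in>?S. i \<le> t} \<ge> 1" using i fin
      by (metis (no_types, lifting) One_nat_def Suc_leI card_gt_0_iff empty_iff finite_subset mem_Collect_eq order_refl subsetI)
    ultimately show "card (A2 (ins_max w i)) \<in> {2..card ?S + 1}" using card_A2_ins[OF pw np i] by simp
  qed
qed

lemma Fa132': assumes "w \<in> Av m [[1,3,2]]" "1 \<le> m" "i \<in> A2 w" "x = ins_max w i"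
  shows "maxfirst x \<longleftrightarrow> card (A2 x) = card (A2 w) + 1"
proof -
  have pw: "is_perm m w" and np: "\<not> p132 w" using assms(1) Av1 avoid132 by auto
  have ir: "1 \<le> i" "i \<le> m+1" using assms(3) perm_len[OF pw] unfolding active_sites_def by auto
  interpret insctx m w i using pw ir by unfold_locales auto
  have c: "card (A2 x) = card {j\<in>A2 w. i \<le> j} + 1" using card_A2_ins[OF pw np assms(3)] assms(4) by simp
  have mf: "maxfirst x \<longleftrightarrow> i = 1" using mf_ins assms(2,4) by simp
  show ?thesis
  proof (cases "i = 1")
    case True
    have "{j\<in>A2 w. i \<le> j} = A2 w" using True A2_ge1 by auto
    then show ?thesis using c True mf by simp
  next
    case False
    have sub1: "{j\<in>A2 w. i \<le> j} \<subseteq> A2 w" by blast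
    have "1 \<in> A2 w" using one_in_A2[OF pw np] .
    moreover have "1 \<notin> {j\<in>A2 w. i \<le> j}" using False ir by simp
    ultimately have sub: "{j\<in>A2 w. i \<le> j} \<subset> A2 w" using sub1 by blast
    have "card {j\<in>A2 w. i \<le> j} < card (A2 w)"
      by (rule psubset_card_mono[OF finite_act sub])
    then show ?thesis using c mf False by simp
  qed
qed

lemma kq132: assumes "is_perm m w" "\<not> p132 w" "q < m" "w!q = m" "1 \<le> q" "i \<in> A2 w" "2 \<le> i"
  shows "card (A2 (ins_max w i)) = card (A2 w) \<longleftrightarrow> i = q+2"
proof -
  let ?S = "A2 w"
  have S: "?S = {i\<in>{1..m+1}. \<not> cross w (i-1)}" using act132[OF assms(1,2)] .
  have a: "q+2 \<in> ?S"
  proof -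
    have "\<not> cross w (q+1)"
    proof
      assume "cross w (q+1)"
      then obtain a c where ac: "a < q+1" "q+1 \<le> c" "c < m" "w!a < w!c" unfolding cross_def perm_len[OF assms(1)] by auto
      have "w!c \<le> m" "w!c \<noteq> m" using perm_nth[OF assms(1) ac(3)] perm_nth_inj[OF assms(1) ac(3) assms(3)] ac assms(4) by auto
      then have wc: "w!c < w!q" using assms(4) by simp
      show False
      proof (cases "a = q")
        case True then show False using ac wc by simp
      next
        case False
        then have "p132 w" unfolding p132_def perm_len[OF assms(1)] using ac wc
          by (intro exI[of _ a] exI[of _ q] exI[of _ c]) auto
        then show False using assms(2) by simp
      qed
    qed
    then show ?thesis using S assms(3) by auto
  qed
  have b: "q+2 \<le> t" if "t \<in> ?S" "2 \<le> t" for t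
  proof (rule ccontr)
    assume "\<not> q+2 \<le> t"
    have "w!0 \<le> m" "w!0 \<noteq> m" using perm_nth[OF assms(1), of 0] perm_nth_inj[OF assms(1), of 0 q] assms(3,4,5) by auto
    then have "cross w (t-1)" unfolding cross_def perm_len[OF assms(1)] using that \<open>\<not> q+2 \<le> t\<close> assms(3,4)
      by (intro exI[of _ 0] exI[of _ q]) auto
    then show False using that S by auto
  qed
  have one: "1 \<in> ?S" using one_in_A2[OF assms(1,2)] .
  have fin: "finite ?S" by (rule finite_act)
  have c: "card (A2 (ins_max w i)) = card {j\<in>?S. i \<le> j} + 1" using card_A2_ins[OF assms(1,2,6)] .
  have iq: "q+2 \<le> i" using b assms(6,7) by simp
  show ?thesis
  proof (cases "i = q+2")
    case True
    have "{j\<in>?S. i \<le> j} = ?S - {1}"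
    proof
      show "{j\<in>?S. i \<le> j} \<subseteq> ?S - {1}" using True by auto
      show "?S - {1} \<subseteq> {j\<in>?S. i \<le> j}"
      proof
        fix j assume j: "j \<in> ?S - {1}"
        then have "2 \<le> j" using A2_ge1 by fastforce
        then show "j \<in> {j\<in>?S. i \<le> j}" using b j True by auto
      qed
    qed
    then have "card {j\<in>?S. i \<le> j} = card ?S - 1" using one fin by simp
    moreover have "card ?S > 0" by (rule card_gt_0_iff[THEN iffD2]) (use one fin in auto)
    ultimately show ?thesis using c True by simp
  next
    case False
    have "{j\<in>?S. i \<le> j} \<subseteq> ?S - {1, q+2}" using False iq by auto
    then have "card {j\<in>?S. i \<le> j} \<le> card (?S - {1, q+2})" using fin by (intro card_mono) auto
    also have "\<dots> = card ?S - 2" using one a fin by (simp add: card_Diff_subset)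
    finally have "card {j\<in>?S. i \<le> j} \<le> card ?S - 2" .
    moreover have "card ?S \<ge> 2"
    proof -
      have "{1, q+2} \<subseteq> ?S" using one a by auto
      then have "card {1, q+2} \<le> card ?S" by (rule card_mono[OF fin])
      then show ?thesis by simp
    qed
    ultimately show ?thesis using c False by simp
  qed
qed

lemma Fb132': assumes "w \<in> Av m [[1,3,2]]" "1 \<le> m" "i \<in> A2 w" "x = ins_max w i"
  shows "has_123star x \<longleftrightarrow> has_123star w \<or> (\<not> maxfirst w \<and> card (A2 x) = card (A2 w))"
proof -
  have m1: "1 \<le> m" using assms by simp
  have pw: "is_perm m w" and np: "\<not> p132 w" using assms(1) Av1 avoid132 by auto
  have ir: "1 \<le> i" "i \<le> m+1" using assms(3) perm_len[OF pw] unfolding active_sites_def by auto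
  have xA: "x \<in> Av (m+1) [[1,3,2]]" using ins_Av[OF assms(1,3)] assms(4) by simp
  have npx: "\<not> p132 x" using xA Av1 avoid132 by auto
  interpret insctx m w i using pw ir by unfold_locales auto
  let ?k = "card (A2 w)"
  have xz: "x = z" using assms(4) by simp
  have c1: "card (A2 x) = ?k + 1" if "i = 1"
    using Fa132'[OF assms] mf_ins m1 that xz by simp
  show ?thesis
  proof
    assume "has_123star x"
    then obtain a b where ab: "a < b" "b+1 < m+1" "x!a < x!b" "x!(b+1) = x!b+1"
      unfolding has_123star_def using lz xz by auto
    have bp: "b \<noteq> p" using z_le[of "b+1"] z_eq ab xz by auto
    have ap: "a \<noteq> p" using z_val[of b] bp z_eq ab xz by auto
    show "has_123star w \<or> (\<not> maxfirst w \<and> card (A2 x) = ?k)"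
    proof (cases "b+1 = p")
      case True
      have wb: "w!b = m" using z_lt[of b] z_eq True ab xz by simp
      have "b < m" using ab by simp
      have "i = b+2" using True ir by simp
      then have "card (A2 x) = ?k" using kq132[OF pw np \<open>b < m\<close> wb _ assms(3)] ab xz by simp
      moreover have "\<not> maxfirst w" using maxfirst_perm[OF pw m1] wb perm_nth_inj[OF pw, of 0 b] ab by auto
      ultimately show ?thesis by simp
    next
      case False
      let ?d = "\<lambda>t. if t < p then t else t-1"
      have d: "?d a < ?d b" "?d (b+1) = ?d b + 1" "?d b + 1 < m" using ab ap bp False i2 by auto
      have "x!a = w!(?d a)" "x!b = w!(?d b)" "x!(b+1) = w!(?d (b+1))"
        using z_down[of a] z_down[of b] z_down[of "b+1"] ab ap bp False xz by auto
      then have "has_123star w" unfolding has_123star_def lw using d ab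
        by (intro exI[of _ "?d a"] exI[of _ "?d b"]) auto
      then show ?thesis by simp
    qed
  next
    assume "has_123star w \<or> (\<not> maxfirst w \<and> card (A2 x) = ?k)"
    then show "has_123star x"
    proof
      assume "has_123star w"
      then obtain a b where ab: "a < b" "b+1 < m" "w!a < w!b" "w!(b+1) = w!b+1"
        unfolding has_123star_def using lw by auto
      show ?thesis
      proof (cases "p = b+1")
        case True
        have "w!(b+1) \<le> m" using w_val[of "b+1"] ab by simp
        moreover have "p+1 \<le> m" using ab True by simp
        moreover have "x!a = w!a" "x!p = m+1" using z_lt[of a] z_eq ab True xz by auto
        moreover have "x!(b+2) = w!(b+1)" using z_gt[of "b+2"] ab True xz by simp
        moreover have "p + 1 = b + 2" using True by simp
        ultimately have "p132 x" unfolding p132_def lz xz using ab True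
          by (intro exI[of _ a] exI[of _ p] exI[of _ "p+1"]) (auto simp: xz)
        then show ?thesis using npx by simp
      next
        case False
        let ?u = "\<lambda>t. if t < p then t else t+1"
        have u: "?u a < ?u b" "?u (b+1) = ?u b + 1" "?u b + 1 < m+1" using ab False by auto
        have "x!(?u a) = w!a" "x!(?u b) = w!b" "x!(?u (b+1)) = w!(b+1)"
          using z_up[of a] z_up[of b] z_up[of "b+1"] ab xz by auto
        then show "has_123star x" unfolding has_123star_def lz xz using u ab
          by (intro exI[of _ "?u a"] exI[of _ "?u b"]) auto
      qed
    next
      assume a: "\<not> maxfirst w \<and> card (A2 x) = ?k"
      then have "i \<noteq> 1" using c1 by auto
      then have i2': "2 \<le> i" using ir by simp
      obtain q where q: "q < m" "w!q = m" using pos_max[OF pw m1] by blast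
      have "q \<noteq> 0"
      proof
        assume "q = 0"
        then have "maxfirst w" using q maxfirst_perm[OF pw m1] by simp
        then show False using a by simp
      qed
      then have "i = q+2" using kq132[OF pw np q _ assms(3) i2'] a xz by simp
      then have pq: "p = q+1" by simp
      have "w!0 \<le> m" "w!0 \<noteq> m" using w_val perm_nth_inj[OF pw, of 0 q] q \<open>q \<noteq> 0\<close> by auto
      moreover have "x!0 = w!0" "x!q = m" "x!(q+1) = m+1" using z_lt[of 0] z_lt[of q] z_eq pq q \<open>q \<noteq> 0\<close> xz by auto
      ultimately show "has_123star x" unfolding has_123star_def lz xz using q \<open>q \<noteq> 0\<close>
        by (intro exI[of _ 0] exI[of _ q]) (auto simp: xz)
    qed
  qed
qed

lemma Fa132: assumes "x \<in> Av n [[1,3,2]]" "2 \<le> n"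
  shows "maxfirst x \<longleftrightarrow> card (A2 x) = card (A2 (small (n-1) x)) + 1"
proof -
  obtain i where i: "small (n-1) x \<in> Av (n-1) [[1,3,2]]" "i \<in> A2 (small (n-1) x)" "x = ins_max (small (n-1) x) i"
    using Av_decomp[OF assms(1)] assms(2) by auto
  show ?thesis using Fa132'[OF i(1) _ i(2) i(3)] assms(2) by simp
qed

lemma Fb132: assumes "x \<in> Av n [[1,3,2]]" "2 \<le> n"
  shows "has_123star x \<longleftrightarrow> has_123star (small (n-1) x) \<or>
    (\<not> maxfirst (small (n-1) x) \<and> card (A2 x) = card (A2 (small (n-1) x)))"
proof -
  obtain i where i: "small (n-1) x \<in> Av (n-1) [[1,3,2]]" "i \<in> A2 (small (n-1) x)" "x = ins_max (small (n-1) x) i"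
    using Av_decomp[OF assms(1)] assms(2) by auto
  show ?thesis using Fb132'[OF i(1) _ i(2) i(3)] assms(2) by simp
qed

lemma claim: "x \<in> Av n [[1,2,3]] \<Longrightarrow> x' \<in> Av n [[1,3,2]] \<Longrightarrow> signature x [1,2,3] = signature x' [1,3,2] \<Longrightarrow>
  (maxfirst x \<longleftrightarrow> maxfirst x') \<and> (has_132star x \<longleftrightarrow> has_123star x')"
proof (induction n arbitrary: x x' rule: less_induct)
  case (less n)
  show ?case
  proof (cases "n \<le> 1")
    case True
    then consider "n = 0" | "n = 1" by linarith
    then have "x = x'" using less.prems(1,2) Av_perm perm0 perm1 by metis
    moreover have "\<not> has_132star x" "\<not> has_123star x" using True less.prems(1) Av_perm perm_len
      unfolding has_132star_def has_123star_def by fastforce+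
    ultimately show ?thesis by simp
  next
    case False
    let ?w = "small (n-1) x" let ?w' = "small (n-1) x'"
    have w: "?w \<in> Av (n-1) [[1,2,3]]" using Av_decomp[OF less.prems(1)] False by auto
    have w': "?w' \<in> Av (n-1) [[1,3,2]]" using Av_decomp[OF less.prems(2)] False by auto
    have s1: "signature x [1,2,3] = card (A3 x) # signature ?w [1,2,3]"
      using sig_rec[OF Av_perm[OF less.prems(1)]] False by auto
    have s2: "signature x' [1,3,2] = card (A2 x') # signature ?w' [1,3,2]"
      using sig_rec[OF Av_perm[OF less.prems(2)]] False by auto
    have hx: "card (A3 x) = card (A2 x')" and sw: "signature ?w [1,2,3] = signature ?w' [1,3,2]"
      using s1 s2 less.prems(3) by auto
    have IH: "(maxfirst ?w \<longleftrightarrow> maxfirst ?w') \<and> (has_132star ?w \<longleftrightarrow> has_123star ?w')"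
      using less.IH[of "n-1" ?w ?w'] w w' sw False by simp
    have hw: "card (A3 ?w) = card (A2 ?w')"
    proof (cases "n = 2")
      case True
      then have n1: "n - 1 = 1" by simp
      have "is_perm 1 ?w" "is_perm 1 ?w'" using Av_perm[OF w] Av_perm[OF w'] n1 by simp_all
      then have "?w = [1]" "?w' = [1]" using perm1 by blast+
      then show ?thesis using act_single by simp
    next
      case False
      then have "2 \<le> n - 1" using \<open>\<not> n \<le> 1\<close> by simp
      have e1: "signature ?w [1,2,3] = card (A3 ?w) # signature (small (n-1-1) ?w) [1,2,3]"
        by (rule sig_rec[OF Av_perm[OF w] \<open>2 \<le> n - 1\<close>])
      have e2: "signature ?w' [1,3,2] = card (A2 ?w') # signature (small (n-1-1) ?w') [1,3,2]"
        by (rule sig_rec[OF Av_perm[OF w'] \<open>2 \<le> n - 1\<close>])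
      show ?thesis using sw e1 e2 by simp
    qed
    have n2: "2 \<le> n" using False by simp
    have a1: "maxfirst x \<longleftrightarrow> card (A3 x) = card (A3 ?w) + 1" by (rule Fa123[OF less.prems(1) n2])
    have a2: "maxfirst x' \<longleftrightarrow> card (A2 x') = card (A2 ?w') + 1" by (rule Fa132[OF less.prems(2) n2])
    have b1: "has_132star x \<longleftrightarrow> has_132star ?w \<or> (\<not> maxfirst ?w \<and> card (A3 x) = card (A3 ?w))"
      by (rule Fb123[OF less.prems(1) n2])
    have b2: "has_123star x' \<longleftrightarrow> has_123star ?w' \<or> (\<not> maxfirst ?w' \<and> card (A2 x') = card (A2 ?w'))"
      by (rule Fb132[OF less.prems(2) n2])
    show ?thesis using a1 a2 b1 b2 IH hx hw by metis
  qed
qed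

lemma west_prop: assumes "x \<in> Av n [[1,2,3]]"
  shows "west x \<in> Av n [[1,3,2]] \<and> signature (west x) [1,3,2] = signature x [1,2,3]"
proof -
  have len: "length x = n" using assms Av_perm perm_len by blast
  have "\<exists>!x'. x' \<in> Av n [[1,3,2]] \<and> signature x' [1,3,2] = signature x [1,2,3]"
  proof (rule ex_ex1I)
    show "\<exists>x'. x' \<in> Av n [[1,3,2]] \<and> signature x' [1,3,2] = signature x [1,2,3]"
      using sig_exist[OF H123 H132 _ _ assms] by auto
  next
    fix x1 x2 assume "x1 \<in> Av n [[1,3,2]] \<and> signature x1 [1,3,2] = signature x [1,2,3]"
      "x2 \<in> Av n [[1,3,2]] \<and> signature x2 [1,3,2] = signature x [1,2,3]"
    then show "x1 = x2" using sig_inj[OF H132] by metis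
  qed
  then show ?thesis unfolding west_def len by (rule theI')
qed

theorem theorem3p18:
  fixes n :: nat
  shows "bij_betw west {x \<in> Av n [[1,2,3]]. \<not> has_132star x}
                       {x \<in> Av n [[1,3,2]]. \<not> has_123star x}
         \<and> card {x \<in> Av n [[1,2,3]]. \<not> has_132star x}
           = card {x \<in> Av n [[1,3,2]]. \<not> has_123star x}"
proof -
  let ?A = "{x \<in> Av n [[1,2,3]]. \<not> has_132star x}"
  let ?B = "{x \<in> Av n [[1,3,2]]. \<not> has_123star x}"
  have inj: "inj_on west ?A"
  proof (rule inj_onI)
    fix x1 x2 assume a: "x1 \<in> ?A" "x2 \<in> ?A" "west x1 = west x2"
    then have "signature x1 [1,2,3] = signature x2 [1,2,3]" using west_prop by (metis (no_types, lifting) mem_Collect_eq)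
    then show "x1 = x2" using sig_inj[OF H123] a by blast
  qed
  have img: "west ` ?A = ?B"
  proof
    show "west ` ?A \<subseteq> ?B"
    proof
      fix y assume "y \<in> west ` ?A"
      then obtain x where x: "x \<in> ?A" "y = west x" by auto
      have "west x \<in> Av n [[1,3,2]]" "signature (west x) [1,3,2] = signature x [1,2,3]" using west_prop x by auto
      then have "\<not> has_123star (west x)" using claim[of x n "west x"] x by auto
      then show "y \<in> ?B" using x \<open>west x \<in> Av n [[1,3,2]]\<close> by simp
    qed
    show "?B \<subseteq> west ` ?A"
    proof
      fix x' assume x': "x' \<in> ?B"
      obtain x where x: "x \<in> Av n [[1,2,3]]" "signature x [1,2,3] = signature x' [1,3,2]"
        using sig_exist[OF H132 H123 _ _, of x' n] x' by auto
      have "\<not> has_132star x" using claim[OF x(1) _ x(2)] x' by auto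
      moreover have "west x = x'" using west_prop[OF x(1)] x x' sig_inj[OF H132] by auto
      ultimately show "x' \<in> west ` ?A" using x by force
    qed
  qed
  have "bij_betw west ?A ?B" unfolding bij_betw_def using inj img by simp
  then show ?thesis using bij_betw_same_card by blast
qed

end
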